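(* Let $q=r^2$ where $r$ is a prime power and let $s$ be a positive integer. Let $C_1,\dots,C_s$ be linear codes of the same length $m$ over $\mathbb{F}_q$. If $A\in M_{s,s}(\mathbb{F}_q)$ satisfies $AA^\dagger=\lambda J_s$ for some nonzero $\lambda\in\mathbb{F}_q$ and $C_i\subseteq C_{s-i+1}^{\perp_H}$ for all $1\le i\le s$, then the matrix-product code $C_A=[C_1,\dots,C_s]\cdot A$ satisfies $C_A\subseteq C_A^{\perp_H}$.
   Context: For $a\in\mathbb{F}_q$, $\overline{a}:=a^r$. For a matrix $A=[a_{ij}]$ over $\mathbb{F}_q$, $A^\dagger:=[\overline{a_{ji}}]$. $J_s$ is the $s\times s$ anti-diagonal matrix with all anti-diagonal entries equal to $1$ and all other entries $0$. The Hermitian inner product on $\mathbb{F}_q^n$ is $\langle u,v\rangle_H=\sum_i u_i\overline{v_i}$, and $C^{\perp_H}$ is the dual of $C$ with respect to it. If $C_i$ has generator matrix $G_i$ and $A=[a_{ij}]\in M_{s,l}(\mathbb{F}_q)$, the matrix-product code $[C_1,\dots,C_s]\cdot A$ is the linear code of length $ml$ generated by the block matrix whose $(i,j)$ block is $a_{ij}G_i$. *)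

theory Defs
  imports Main "HOL-Computational_Algebra.Primes" "HOL-Library.Cardinality"
begin

definition vecs :: "nat \<Rightarrow> (nat \<Rightarrow> 'a::zero) set" where
  "vecs n = {v. \<forall>i\<ge>n. v i = 0}"

definition linear_code :: "nat \<Rightarrow> (nat \<Rightarrow> 'a::field) set \<Rightarrow> bool" where
  "linear_code n C \<longleftrightarrow> C \<subseteq> vecs n \<and> (\<lambda>_. 0) \<in> C \<and>
     (\<forall>u\<in>C. \<forall>v\<in>C. (\<lambda>i. u i + v i) \<in> C) \<and>
     (\<forall>c. \<forall>u\<in>C. (\<lambda>i. c * u i) \<in> C)"

definition conj_r :: "nat \<Rightarrow> 'a::field \<Rightarrow> 'a" where
  "conj_r r a = a ^ r"

definition herm_ip :: "nat \<Rightarrow> nat \<Rightarrow> (nat \<Rightarrow> 'a::field) \<Rightarrow> (nat \<Rightarrow> 'a) \<Rightarrow> 'a" where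
  "herm_ip r n u v = (\<Sum>i<n. u i * conj_r r (v i))"

definition herm_dual :: "nat \<Rightarrow> nat \<Rightarrow> (nat \<Rightarrow> 'a::field) set \<Rightarrow> (nat \<Rightarrow> 'a) set" where
  "herm_dual r n C = {v \<in> vecs n. \<forall>u\<in>C. herm_ip r n u v = 0}"

text \<open>Matrix-product code [C_0,...,C_(s-1)] . A for an s x l matrix A (0-indexed),
  codes of length m. Codeword position j*m + k (j < l, k < m) carries
  sum_i a_ij (c_i)_k, i.e. the row space of the block matrix with blocks a_ij G_i.\<close>
definition mp_code :: "nat \<Rightarrow> nat \<Rightarrow> nat \<Rightarrow> (nat \<Rightarrow> (nat \<Rightarrow> 'a::field) set)
    \<Rightarrow> (nat \<Rightarrow> nat \<Rightarrow> 'a) \<Rightarrow> (nat \<Rightarrow> 'a) set" where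
  "mp_code m s l C A = {w. \<exists>c. (\<forall>i<s. c i \<in> C i) \<and>
      w = (\<lambda>p. if p < m * l then (\<Sum>i<s. A i (p div m) * c i (p mod m)) else 0)}"

definition antidiag :: "nat \<Rightarrow> nat \<Rightarrow> nat \<Rightarrow> 'a::zero_neq_one" where
  "antidiag s i j = (if i < s \<and> j < s \<and> i + j = s - 1 then 1 else 0)"

definition prime_power :: "nat \<Rightarrow> bool" where
  "prime_power r \<longleftrightarrow> (\<exists>p k. prime p \<and> k \<ge> 1 \<and> r = p ^ k)"

end

theory Submission
  imports Defs "HOL-Number_Theory.Number_Theory"
begin

lemma sum_split_blocks:
  fixes f :: "nat \<Rightarrow> 'b::comm_monoid_add"
  shows "(\<Sum>p<m*s. f p) = (\<Sum>j<s. \<Sum>k<m. f (j*m+k))"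
proof (induction s)
  case 0 then show ?case by simp
next
  case (Suc s)
  have "{..<m*Suc s} = {..<m*s} \<union> {m*s..<m*s+m}" by auto
  then have "(\<Sum>p<m*Suc s. f p) = (\<Sum>p<m*s. f p) + (\<Sum>p\<in>{m*s..<m*s+m}. f p)"
    by (simp add: sum.union_disjoint ivl_disj_int)
  also have "(\<Sum>p\<in>{m*s..<m*s+m}. f p) = (\<Sum>k<m. f (s*m+k))"
  proof -
    have "(\<Sum>p\<in>{m*s..<m*s+m}. f p) = (\<Sum>k\<in>{0..<m}. f (k + m*s))"
      using sum.shift_bounds_nat_ivl[of f 0 "m*s" m] by (simp add: add.commute)
    then show ?thesis by (simp add: lessThan_atLeast0 add.commute mult.commute)
  qed
  finally show ?case using Suc by simp
qed

lemma char_eq: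
  assumes "prime_power r" and "CARD('a::{finite,field}) = r ^ 2"
  obtains k where "prime (CHAR('a))" "r = CHAR('a) ^ k"
proof -
  obtain p k where p: "prime p" "k \<ge> 1" "r = p ^ k" using assms(1) unfolding prime_power_def by blast
  have pos: "CHAR('a) > 0" by (rule finite_imp_CHAR_pos) simp
  have pc: "prime (CHAR('a))" using pos prime_CHAR_semidom by blast
  have "CHAR('a) dvd p ^ (k*2)" using CHAR_dvd_CARD[where 'a='a] assms(2) p(3)
    by (simp add: power_mult)
  then have "CHAR('a) dvd p" using pc prime_dvd_power by blast
  then have "CHAR('a) = p" using pc p(1) primes_dvd_imp_eq by blast
  then show ?thesis using pc p that by blast
qed

theorem corollary3p2:
  fixes r s m :: nat
    and C :: "nat \<Rightarrow> (nat \<Rightarrow> 'a::{finite,field}) set"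
    and A :: "nat \<Rightarrow> nat \<Rightarrow> 'a"
    and lam :: 'a
  assumes "prime_power r"
    and "CARD('a) = r ^ 2"
    and "s \<ge> 1"
    and "\<forall>i<s. linear_code m (C i)"
    and "lam \<noteq> 0"
    and "\<forall>i<s. \<forall>j<s. (\<Sum>k<s. A i k * conj_r r (A j k)) = lam * antidiag s i j"
    and "\<forall>i<s. C i \<subseteq> herm_dual r m (C (s - 1 - i))"
  shows "mp_code m s s C A \<subseteq> herm_dual r (m * s) (mp_code m s s C A)"
proof
  obtain k where pc: "prime (CHAR('a))" and rk: "r = CHAR('a) ^ k"
    by (rule char_eq[OF assms(1,2)])
  define cj :: "'a \<Rightarrow> 'a" where "cj = conj_r r"
  have cj_sum: "cj (sum f S) = sum (\<lambda>i. cj (f i)) S" for f :: "nat \<Rightarrow> 'a" and S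
    unfolding cj_def conj_r_def by (rule freshmans_dream_sum'[OF pc rk])
  have cj_mult: "cj (x*y) = cj x * cj y" for x y :: 'a
    unfolding cj_def conj_r_def by (simp add: power_mult_distrib)
  fix w assume "w \<in> mp_code m s s C A"
  then obtain c where c: "\<forall>i<s. c i \<in> C i" and w: "w = (\<lambda>p. if p < m * s then (\<Sum>i<s. A i (p div m) * c i (p mod m)) else 0)"
    unfolding mp_code_def by blast
  have "w \<in> vecs (m*s)" unfolding vecs_def w by auto
  moreover have "herm_ip r (m*s) u w = 0" if "u \<in> mp_code m s s C A" for u
  proof -
    obtain d where d: "\<forall>i<s. d i \<in> C i" and u: "u = (\<lambda>p. if p < m * s then (\<Sum>i<s. A i (p div m) * d i (p mod m)) else 0)"
      using \<open>u \<in> mp_code m s s C A\<close> unfolding mp_code_def by blast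
    have idx: "j*m+k < m*s \<and> (j*m+k) div m = j \<and> (j*m+k) mod m = k" if "j<s" "k<m" for j k
    proof -
      have "j*m+k < j*m+m" using that by simp
      also have "\<dots> \<le> m*s" using that by (metis add.commute mult.commute mult_Suc_right mult_le_mono2 Suc_le_eq)
      finally show ?thesis using that by simp
    qed
    have "herm_ip r (m*s) u w = (\<Sum>j<s. \<Sum>k<m. u (j*m+k) * cj (w (j*m+k)))"
      unfolding herm_ip_def cj_def by (rule sum_split_blocks)
    also have "\<dots> = (\<Sum>j<s. \<Sum>k<m. \<Sum>i<s. \<Sum>i'<s. (A i j * cj (A i' j)) * (d i k * cj (c i' k)))"
      apply (rule sum.cong[OF refl])+
      apply (simp add: u w idx cj_sum cj_mult sum_product)
      apply (rule sum.cong[OF refl])+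
      by (simp add: ac_simps)
    also have "\<dots> = (\<Sum>j<s. \<Sum>i<s. \<Sum>k<m. \<Sum>i'<s. (A i j * cj (A i' j)) * (d i k * cj (c i' k)))"
      by (rule sum.cong[OF refl]) (rule sum.swap)
    also have "\<dots> = (\<Sum>j<s. \<Sum>i<s. \<Sum>i'<s. \<Sum>k<m. (A i j * cj (A i' j)) * (d i k * cj (c i' k)))"
      by (rule sum.cong[OF refl], rule sum.cong[OF refl], rule sum.swap)
    also have "\<dots> = (\<Sum>i<s. \<Sum>j<s. \<Sum>i'<s. \<Sum>k<m. (A i j * cj (A i' j)) * (d i k * cj (c i' k)))"
      by (rule sum.swap)
    also have "\<dots> = (\<Sum>i<s. \<Sum>i'<s. \<Sum>j<s. \<Sum>k<m. (A i j * cj (A i' j)) * (d i k * cj (c i' k)))"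
      by (rule sum.cong[OF refl]) (rule sum.swap)
    also have "\<dots> = (\<Sum>i<s. \<Sum>i'<s. \<Sum>k<m. \<Sum>j<s. (A i j * cj (A i' j)) * (d i k * cj (c i' k)))"
      by (rule sum.cong[OF refl], rule sum.cong[OF refl], rule sum.swap)
    also have "\<dots> = (\<Sum>i<s. \<Sum>i'<s. lam * antidiag s i i' * herm_ip r m (d i) (c i'))"
    proof (rule sum.cong[OF refl], rule sum.cong[OF refl])
      fix i i' assume i: "i \<in> {..<s}" and i': "i' \<in> {..<s}"
      have "(\<Sum>k<m. \<Sum>j<s. (A i j * cj (A i' j)) * (d i k * cj (c i' k)))
          = (\<Sum>k<m. (\<Sum>j<s. A i j * cj (A i' j)) * (d i k * cj (c i' k)))"
        by (simp add: sum_distrib_right)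
      also have "\<dots> = (\<Sum>k<m. (lam * antidiag s i i') * (d i k * cj (c i' k)))"
        using assms(6) i i' by (simp add: cj_def)
      also have "\<dots> = lam * antidiag s i i' * herm_ip r m (d i) (c i')"
        by (simp add: herm_ip_def cj_def sum_distrib_left)
      finally show "(\<Sum>k<m. \<Sum>j<s. (A i j * cj (A i' j)) * (d i k * cj (c i' k)))
          = lam * antidiag s i i' * herm_ip r m (d i) (c i')" .
    qed
    also have "\<dots> = 0"
    proof (intro sum.neutral ballI)
      fix i i' assume i: "i \<in> {..<s}" and i': "i' \<in> {..<s}"
      show "lam * antidiag s i i' * herm_ip r m (d i) (c i') = 0"
      proof (cases "i + i' = s - 1")
        case True
        then have "i' = s - 1 - i" by simp
        then have e: "s - 1 - i' = i" using i by auto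
        have "c i' \<in> herm_dual r m (C (s - 1 - i'))" using assms(7) c i' by auto
        then have "c i' \<in> herm_dual r m (C i)" using e by simp
        then have "herm_ip r m (d i) (c i') = 0"
          using d i unfolding herm_dual_def by auto
        then show ?thesis by simp
      next
        case False then show ?thesis by (simp add: antidiag_def)
      qed
    qed
    finally show ?thesis .
  qed
  ultimately show "w \<in> herm_dual r (m * s) (mp_code m s s C A)"
    unfolding herm_dual_def by blast
qed

end
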